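(* Suppose $f$ satisfies conditions (a)–(b) below with constant $L$, $h\ge0$ and $L(T^2+Th)\le\frac1{12}$. For $x,y\in\mathbb R^d$ let $\Phi_{x,y}:\mathbb R^d\to\mathbb R^d$ be a map with $\tilde q_{T,h}(x,v)=q_T(y,\Phi_{x,y}(v))$ for all $v$. Then for all $x,y,v\in\mathbb R^d$, \[ \|\Phi_{x,y}(v)-v\|\le\frac3{2T}\|x-y\|+\frac75h\Big(\frac1{5T}\|v\|+\frac7{36}L\|x\|\Big). \]
   Context: $f:\mathbb R^d\to\mathbb R$. Conditions: (a) $f$ has global minimum at $0$, $f(0)=0$; (b) $f\in C^2$, $\|\nabla^2f(x)\|_{op}\le L$ for all $x$. $q_t(x,v)$ is the time-$t$ position of the solution of $\dot x=v,\dot v=-\nabla f(x)$ from $(x,v)$. For $h>0$ with $T/h\in\mathbb N$ (always assumed), $\tilde q_{T,h}(x,v)=x_N$, $N=T/h$, where $x_0=x,v_0=v$, $x_{j+1}=x_j+hv_j-\frac{h^2}2\nabla f(x_j)$, $v_{j+1}=v_j-\frac h2(\nabla f(x_j)+\nabla f(x_{j+1}))$; $\tilde q_{T,0}=q_T$. *)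

theory Defs
  imports "HOL-Analysis.Analysis"
begin

text \<open>Hamiltonian trajectory: (X,V) solves x' = v, v' = - grad f(x) for all times,
  with initial data (x,v) at time 0. Here g is the gradient of f.\<close>
definition ham_traj :: "('a::euclidean_space \<Rightarrow> 'a) \<Rightarrow> 'a \<Rightarrow> 'a \<Rightarrow> (real \<Rightarrow> 'a) \<Rightarrow> (real \<Rightarrow> 'a) \<Rightarrow> bool" where
  "ham_traj g x v X V \<longleftrightarrow> X 0 = x \<and> V 0 = v \<and>
     (\<forall>t. (X has_vector_derivative V t) (at t)) \<and>
     (\<forall>t. (V has_vector_derivative - g (X t)) (at t))"

definition ham_q :: "('a::euclidean_space \<Rightarrow> 'a) \<Rightarrow> real \<Rightarrow> 'a \<Rightarrow> 'a \<Rightarrow> 'a" where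
  "ham_q g t x v = (THE p. \<exists>X V. ham_traj g x v X V \<and> X t = p)"

definition lf_step :: "('a::euclidean_space \<Rightarrow> 'a) \<Rightarrow> real \<Rightarrow> 'a \<times> 'a \<Rightarrow> 'a \<times> 'a" where
  "lf_step g h p = (let x = fst p; v = snd p; x' = x + h *\<^sub>R v - (h^2/2) *\<^sub>R g x
                    in (x', v - (h/2) *\<^sub>R (g x + g x')))"

definition lf_q :: "('a::euclidean_space \<Rightarrow> 'a) \<Rightarrow> real \<Rightarrow> real \<Rightarrow> 'a \<Rightarrow> 'a \<Rightarrow> 'a" where
  "lf_q g T h x v = (if h = 0 then ham_q g T x v
                     else fst ((lf_step g h ^^ nat \<lfloor>T / h\<rfloor>) (x, v)))"

end

theory Submission
  imports Defs
begin


primrec pic :: "('b::euclidean_space \<Rightarrow> 'b) \<Rightarrow> 'b \<Rightarrow> nat \<Rightarrow> real \<Rightarrow> 'b" where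
  "pic F y0 0 = (\<lambda>t. y0)"
| "pic F y0 (Suc n) = (\<lambda>t. y0 + integral {0..t} (\<lambda>s. F (pic F y0 n s)))"

lemma integral_pow_real:
  fixes t c :: real assumes "0 \<le> t"
  shows "integral {0..t} (\<lambda>s. c * s ^ k) = c * t ^ Suc k / Suc k"
proof -
  have "((\<lambda>s. c * s ^ k) has_integral (c * t ^ Suc k / Suc k - c * 0 ^ Suc k / Suc k)) {0..t}"
    apply (rule fundamental_theorem_of_calculus[OF assms])
    apply (auto simp: has_real_derivative_iff_has_vector_derivative[symmetric] intro!: derivative_eq_intros)
    apply (cases k) apply (auto simp: field_simps)
    done
  then have "integral {0..t} (\<lambda>s. c * s ^ k) = c * t ^ Suc k / Suc k - c * 0 ^ Suc k / Suc k"
    by (rule integral_unique)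
  then show ?thesis by simp
qed

lemma pic_cont:
  fixes F :: "'b::euclidean_space \<Rightarrow> 'b"
  assumes contF: "continuous_on UNIV F"
  shows "continuous_on {0..K} (pic F y0 n)"
proof (induction n arbitrary: K)
  case 0 then show ?case by simp
next
  case (Suc n)
  have "continuous_on {0..K} (\<lambda>s. F (pic F y0 n s))"
    using continuous_on_compose2[OF contF Suc.IH] by auto
  then have "continuous_on {0..K} (\<lambda>t. integral {0..t} (\<lambda>s. F (pic F y0 n s)))"
    by (intro indefinite_integral_continuous_1 integrable_continuous_real)
  then show ?case by (auto intro!: continuous_intros)
qed

lemma pic_bound:
  fixes F :: "'b::euclidean_space \<Rightarrow> 'b"
  assumes lip: "\<And>p q. norm (F p - F q) \<le> C * norm (p - q)" and C: "C \<ge> 0"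
    and contF: "continuous_on UNIV F"
  shows "0 \<le> t \<Longrightarrow> norm (pic F y0 (Suc n) t - pic F y0 n t) \<le> norm (F y0) * C^n * t^Suc n / fact (Suc n)"
proof (induction n arbitrary: t)
  case 0 then show ?case by simp
next
  case (Suc n)
  have c1: "continuous_on {0..t} (\<lambda>s. F (pic F y0 m s))" for m
    using continuous_on_compose2[OF contF pic_cont[OF contF]] by auto
  have eq: "pic F y0 (Suc (Suc n)) t - pic F y0 (Suc n) t
     = integral {0..t} (\<lambda>s. F (pic F y0 (Suc n) s) - F (pic F y0 n s))"
  proof -
    have "integral {0..t} (\<lambda>s. F (pic F y0 (Suc n) s) - F (pic F y0 n s))
      = integral {0..t} (\<lambda>s. F (pic F y0 (Suc n) s)) - integral {0..t} (\<lambda>s. F (pic F y0 n s))"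
      by (rule integral_diff; rule integrable_continuous_real; rule c1)
    then show ?thesis by simp
  qed
  have "norm (integral {0..t} (\<lambda>s. F (pic F y0 (Suc n) s) - F (pic F y0 n s)))
     \<le> integral {0..t} (\<lambda>s. (C * norm (F y0) * C^n / fact (Suc n)) * s^Suc n)"
  proof (rule integral_norm_bound_integral)
    show "(\<lambda>s. F (pic F y0 (Suc n) s) - F (pic F y0 n s)) integrable_on {0..t}"
      by (intro integrable_diff integrable_continuous_real c1)
    show "(\<lambda>s. C * norm (F y0) * C ^ n / fact (Suc n) * s ^ Suc n) integrable_on {0..t}"
      by (intro integrable_continuous_real continuous_intros)
    fix s assume s: "s \<in> {0..t}"
    have "norm (F (pic F y0 (Suc n) s) - F (pic F y0 n s)) \<le> C * norm (pic F y0 (Suc n) s - pic F y0 n s)"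
      by (rule lip)
    also have "\<dots> \<le> C * (norm (F y0) * C^n * s^Suc n / fact (Suc n))"
      using Suc.IH[of s] s C by (intro mult_left_mono) auto
    finally show "norm (F (pic F y0 (Suc n) s) - F (pic F y0 n s)) \<le> C * norm (F y0) * C ^ n / fact (Suc n) * s ^ Suc n"
      by (simp add: field_simps)
  qed
  also have "\<dots> = (C * norm (F y0) * C^n / fact (Suc n)) * t ^ Suc (Suc n) / Suc (Suc n)"
    using Suc.prems by (rule integral_pow_real)
  also have "\<dots> = norm (F y0) * C ^ Suc n * t ^ Suc (Suc n) / fact (Suc (Suc n))"
    by (simp add: field_simps)
  finally show ?case using eq by simp
qed

lemma picard_fwd:
  fixes F :: "'b::euclidean_space \<Rightarrow> 'b"
  assumes lip: "\<And>p q. norm (F p - F q) \<le> C * norm (p - q)" and C: "C \<ge> 0"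
  shows "\<exists>Y. Y 0 = y0 \<and> (\<forall>t\<ge>0. (Y has_vector_derivative F (Y t)) (at t within {0..}))"
proof -
  have contF: "continuous_on UNIV F"
    by (rule lipschitz_on_continuous_on[of C]) (auto simp: lipschitz_on_def dist_norm lip C)
  define Y where "Y t = y0 + (\<Sum>i. pic F y0 (Suc i) t - pic F y0 i t)" for t
  have ul: "uniform_limit {0..K} (pic F y0) Y sequentially" if K: "K \<ge> 0" for K
  proof -
    let ?M = "\<lambda>i. norm (F y0) * K * ((C*K)^i / fact i)"
    have "uniform_limit {0..K} (\<lambda>n t. \<Sum>i<n. pic F y0 (Suc i) t - pic F y0 i t)
        (\<lambda>t. \<Sum>i. pic F y0 (Suc i) t - pic F y0 i t) sequentially"
    proof (rule Weierstrass_m_test)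
      fix i t assume t: "t \<in> {0..K}"
      have "norm (pic F y0 (Suc i) t - pic F y0 i t) \<le> norm (F y0) * C^i * t^Suc i / fact (Suc i)"
        using pic_bound[OF lip C contF] t by auto
      also have "\<dots> \<le> norm (F y0) * C^i * K^Suc i / fact (Suc i)"
        using t C by (intro divide_right_mono mult_left_mono power_mono) auto
      also have "\<dots> \<le> norm (F y0) * C^i * K^Suc i / fact i"
        using t C K by (intro divide_left_mono) (auto simp: fact_mono)
      also have "\<dots> = ?M i" by (simp add: power_mult_distrib field_simps)
      finally show "norm (pic F y0 (Suc i) t - pic F y0 i t) \<le> ?M i" .
    next
      show "summable ?M"
        using summable_exp_generic[of "C*K"] by (intro summable_mult) (simp add: divide_inverse mult.commute)
    qed
    then have "uniform_limit {0..K} (\<lambda>n t. y0 + (\<Sum>i<n. pic F y0 (Suc i) t - pic F y0 i t))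
        (\<lambda>t. y0 + (\<Sum>i. pic F y0 (Suc i) t - pic F y0 i t)) sequentially"
      by (intro uniform_limit_intros)
    moreover have "(\<lambda>n t. y0 + (\<Sum>i<n. pic F y0 (Suc i) t - pic F y0 i t)) = pic F y0"
    proof (intro ext)
      fix n t
      show "y0 + (\<Sum>i<n. pic F y0 (Suc i) t - pic F y0 i t) = pic F y0 n t"
        using sum_lessThan_telescope[of "\<lambda>i. pic F y0 i t" n] by (simp del: pic.simps(2))
    qed
    ultimately show ?thesis by (simp add: Y_def[abs_def])
  qed
  have contY: "continuous_on {0..K} Y" if "K \<ge> 0" for K
    by (rule uniform_limit_theorem[OF _ ul[OF that]]) (auto intro!: always_eventually pic_cont contF)
  have inteq: "Y t = y0 + integral {0..t} (\<lambda>s. F (Y s))" if t: "t \<ge> 0" for t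
  proof -
    have u2: "uniform_limit {0..t} (\<lambda>n s. F (pic F y0 n s)) (\<lambda>s. F (Y s)) sequentially"
    proof (rule uniform_limitI)
      fix e :: real assume e: "e > 0"
      have "\<forall>\<^sub>F n in sequentially. \<forall>s\<in>{0..t}. dist (pic F y0 n s) (Y s) < e / (C+1)"
        using uniform_limitD[OF ul[OF t]] e C by simp
      then show "\<forall>\<^sub>F n in sequentially. \<forall>s\<in>{0..t}. dist (F (pic F y0 n s)) (F (Y s)) < e"
      proof (rule eventually_mono, safe)
        fix n s assume h: "\<forall>s\<in>{0..t}. dist (pic F y0 n s) (Y s) < e / (C + 1)" and s: "s \<in> {0..t}"
        have "dist (F (pic F y0 n s)) (F (Y s)) \<le> C * dist (pic F y0 n s) (Y s)"
          using lip by (simp add: dist_norm)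
        also have "\<dots> \<le> C * (e / (C+1))" using bspec[OF h s] C by (rule mult_left_mono[OF less_imp_le])
        also have "\<dots> < e" using C e by (simp add: field_simps)
        finally show "dist (F (pic F y0 n s)) (F (Y s)) < e" .
      qed
    qed
    obtain I J where I: "\<And>n. ((\<lambda>s. F (pic F y0 n s)) has_integral I n) {0..t}"
      and J: "((\<lambda>s. F (Y s)) has_integral J) {0..t}" and IJ: "I \<longlonglongrightarrow> J"
      using uniform_limit_integral[OF u2] continuous_on_compose2[OF contF pic_cont[OF contF]] by auto
    have "(\<lambda>n. pic F y0 (Suc n) t) \<longlonglongrightarrow> y0 + J"
    proof -
      have "(\<lambda>n. y0 + I n) \<longlonglongrightarrow> y0 + J" by (intro tendsto_intros IJ)
      moreover have "pic F y0 (Suc n) t = y0 + I n" for n using integral_unique[OF I[of n]] by simp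
      ultimately show ?thesis by simp
    qed
    moreover have "(\<lambda>n. pic F y0 (Suc n) t) \<longlonglongrightarrow> Y t"
    proof -
      have "uniform_limit {t} (pic F y0) Y sequentially"
        by (rule uniform_limit_on_subset[OF ul[OF t]]) (use t in auto)
      then have "(\<lambda>n. pic F y0 n t) \<longlonglongrightarrow> Y t" by simp
      then show ?thesis by (rule LIMSEQ_Suc)
    qed
    ultimately have "Y t = y0 + J" using LIMSEQ_unique by blast
    then show ?thesis using integral_unique[OF J] by simp
  qed
  show ?thesis
  proof (intro exI conjI allI impI)
    show "Y 0 = y0" using inteq[of 0] by simp
    fix t :: real assume t: "t \<ge> 0"
    have c: "continuous_on {0..t+1} (\<lambda>s. F (Y s))"
      using continuous_on_compose2[OF contF contY[of "t+1"]] t by auto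
    have d: "((\<lambda>u. y0 + integral {0..u} (\<lambda>s. F (Y s))) has_vector_derivative F (Y t)) (at t within {0..t+1})"
      using has_vector_derivative_add[OF has_vector_derivative_const integral_has_vector_derivative[OF c]] t
      by simp
    have d2: "(Y has_vector_derivative F (Y t)) (at t within {0..t+1})"
      by (rule has_vector_derivative_transform[OF _ _ d]) (use t inteq in auto)
    have "at t within {0..t+1} = at t within {0..}"
      by (rule at_within_nhd[of _ "{..<t+1}"]) auto
    then show "(Y has_vector_derivative F (Y t)) (at t within {0..})" using d2 by simp
  qed
qed

lemma hvd_fst: "(f has_vector_derivative f') F \<Longrightarrow> ((\<lambda>x. fst (f x)) has_vector_derivative fst f') F"
  unfolding has_vector_derivative_def by (drule has_derivative_fst) simp

lemma hvd_snd: "(f has_vector_derivative f') F \<Longrightarrow> ((\<lambda>x. snd (f x)) has_vector_derivative snd f') F"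
  unfolding has_vector_derivative_def by (drule has_derivative_snd) simp

lemma ham_exists:
  fixes g :: "'a::euclidean_space \<Rightarrow> 'a"
  assumes glip: "\<And>a b. norm (g a - g b) \<le> L * norm (a - b)" and L: "L \<ge> 0"
  shows "\<exists>X V. ham_traj g x v X V"
proof -
  define F :: "'a \<times> 'a \<Rightarrow> 'a \<times> 'a" where "F p = (snd p, - g (fst p))" for p
  have lipF: "norm (F p - F q) \<le> (1 + L) * norm (p - q)" for p q
  proof -
    have "norm (F p - F q) = norm (snd p - snd q, g (fst q) - g (fst p))" by (simp add: F_def)
    also have "\<dots> \<le> norm (snd p - snd q) + norm (g (fst q) - g (fst p))" by (rule norm_Pair_le)
    also have "\<dots> \<le> norm (p - q) + L * norm (p - q)"
    proof (rule add_mono)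
      have pq: "p - q = (fst p - fst q, snd p - snd q)" by (simp add: prod_eq_iff)
      show "norm (snd p - snd q) \<le> norm (p - q)"
        unfolding pq by (rule norm_snd_le)
      have "norm (fst p - fst q) \<le> norm (p - q)"
        unfolding pq by (rule norm_fst_le)
      then have "norm (fst q - fst p) \<le> norm (p - q)" by (simp add: norm_minus_commute)
      then show "norm (g (fst q) - g (fst p)) \<le> L * norm (p - q)"
        using glip[of "fst q" "fst p"] L by (meson mult_left_mono order_trans)
    qed
    finally show ?thesis by (simp add: algebra_simps)
  qed
  obtain Y1 where Y10: "Y1 0 = (x, v)" and Y1d: "\<And>t. t \<ge> 0 \<Longrightarrow> (Y1 has_vector_derivative F (Y1 t)) (at t within {0..})"
    using picard_fwd[OF lipF, of "(x, v)"] L by auto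
  obtain Y2 where Y20: "Y2 0 = (x, - v)" and Y2d: "\<And>t. t \<ge> 0 \<Longrightarrow> (Y2 has_vector_derivative F (Y2 t)) (at t within {0..})"
    using picard_fwd[OF lipF, of "(x, - v)"] L by auto
  define R :: "'a \<times> 'a \<Rightarrow> 'a \<times> 'a" where "R p = (fst p, - snd p)" for p
  have FR: "F (R p) = (- fst (F p), snd (F p))" for p by (simp add: F_def R_def)
  have Y2r: "((\<lambda>t. R (Y2 (- t))) has_vector_derivative F (R (Y2 (- t)))) (at t within {..0})" if t: "t \<le> 0" for t
  proof -
    have "(uminus has_vector_derivative (-1)) (at t within {..0})"
      by (auto intro!: derivative_eq_intros)
    moreover have "(Y2 has_vector_derivative F (Y2 (- t))) (at (- t) within uminus ` {..0})"
      using Y2d[of "-t"] t by simp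
    ultimately have "((Y2 \<circ> uminus) has_vector_derivative ((-1) *\<^sub>R F (Y2 (- t)))) (at t within {..0})"
      by (rule vector_diff_chain_within)
    then have d: "((\<lambda>t. Y2 (- t)) has_vector_derivative - F (Y2 (- t))) (at t within {..0})"
      by (simp add: o_def)
    have "((\<lambda>t. (fst (Y2 (- t)), - snd (Y2 (- t)))) has_vector_derivative
        (fst (- F (Y2 (- t))), - snd (- F (Y2 (- t))))) (at t within {..0})"
      by (intro has_vector_derivative_Pair has_vector_derivative_minus hvd_fst hvd_snd d)
    then show ?thesis by (simp add: R_def FR) (simp add: F_def)
  qed
  define Y where "Y t = (if t \<in> {0..} then Y1 t else R (Y2 (- t)))" for t
  have Yd: "(Y has_vector_derivative F (Y t)) (at t)" for t
  proof -
    have cl1: "closure {0::real..} = {0..}" by (simp add: closure_closed)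
    have "((\<lambda>t. if t \<in> {0..} then Y1 t else R (Y2 (- t))) has_vector_derivative
        (if t \<in> {0..} then F (Y1 t) else F (R (Y2 (- t))))) (at t within UNIV)"
    proof (rule has_vector_derivative_If_within_closures[where T="{..<0}"])
      show "t \<in> {0..} \<union> {..<0}" by auto
      show "UNIV = {0::real..} \<union> {..<0}" by auto
      show "(Y1 has_vector_derivative F (Y1 t)) (at t within {0..} \<union> (closure {0..} \<inter> closure {..<0}))"
        if "t \<in> {0..} \<union> (closure {0..} \<inter> closure {..<0})"
        using that Y1d[of t] by (auto simp: cl1 Un_absorb2)
      have e: "{..<0} \<union> (closure {0..} \<inter> closure {..<0}) = {..0::real}"
        by (auto simp: cl1)
      show "((\<lambda>t. R (Y2 (- t))) has_vector_derivative F (R (Y2 (- t))))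
          (at t within {..<0} \<union> (closure {0..} \<inter> closure {..<0}))"
        if "t \<in> {..<0} \<union> (closure {0..} \<inter> closure {..<0})"
        using that Y2r[of t] unfolding e by auto
      show "Y1 t = R (Y2 (- t))" if "t \<in> closure {0..}" "t \<in> closure {..<0}"
        using that Y10 Y20 by (auto simp: cl1 R_def)
      show "F (Y1 t) = F (R (Y2 (- t)))" if "t \<in> closure {0..}" "t \<in> closure {..<0}"
        using that Y10 Y20 by (auto simp: cl1 R_def)
    qed
    then show ?thesis by (simp add: Y_def[abs_def] if_distrib)
  qed
  show ?thesis
  proof (intro exI)
    show "ham_traj g x v (\<lambda>t. fst (Y t)) (\<lambda>t. snd (Y t))"
      unfolding ham_traj_def
    proof (intro conjI allI)
      show "fst (Y 0) = x" "snd (Y 0) = v" using Y10 by (auto simp: Y_def)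
      fix t
      show "((\<lambda>t. fst (Y t)) has_vector_derivative snd (Y t)) (at t)"
        using hvd_fst[OF Yd[of t]] by (simp add: F_def)
      show "((\<lambda>t. snd (Y t)) has_vector_derivative - g (fst (Y t))) (at t)"
        using hvd_snd[OF Yd[of t]] by (simp add: F_def)
    qed
  qed
qed



lemma mvt_at:
  fixes f :: "real \<Rightarrow> 'b::real_normed_vector"
  assumes ab: "a \<le> b" and d: "\<And>s. a \<le> s \<Longrightarrow> s \<le> b \<Longrightarrow> (f has_vector_derivative f' s) (at s)"
    and bnd: "\<And>s. a \<le> s \<Longrightarrow> s \<le> b \<Longrightarrow> norm (f' s) \<le> B"
  shows "norm (f b - f a) \<le> B * (b - a)"
proof (cases "a = b")
  case False
  then have ab': "a < b" using ab by simp
  have cont: "continuous_on {a..b} f"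
    using d by (intro continuous_at_imp_continuous_on ballI has_vector_derivative_continuous) auto
  have "norm (f b - f a) \<le> B * b - B * a"
  proof (rule differentiable_bound_general[OF ab' cont, of "\<lambda>s. B * s" f' "\<lambda>_. B"])
    show "continuous_on {a..b} (\<lambda>s. B * s)" by (intro continuous_intros)
    fix s assume "a < s" "s < b"
    then show "(f has_vector_derivative f' s) (at s)" "norm (f' s) \<le> B" using d bnd by auto
    show "((\<lambda>s. B * s) has_vector_derivative B) (at s)"
      by (auto intro!: derivative_eq_intros simp: has_real_derivative_iff_has_vector_derivative[symmetric])
  qed
  then show ?thesis by (simp add: algebra_simps)
qed simp

lemma max_on_interval:
  fixes f :: "real \<Rightarrow> 'b::real_normed_vector"
  assumes "a \<le> b" "continuous_on {a..b} f"
  obtains s where "a \<le> s" "s \<le> b" "\<And>t. a \<le> t \<Longrightarrow> t \<le> b \<Longrightarrow> norm (f t) \<le> norm (f s)"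
proof -
  have "\<exists>s\<in>{a..b}. \<forall>t\<in>{a..b}. norm (f t) \<le> norm (f s)"
    using assms by (intro continuous_attains_sup) (auto intro!: continuous_intros)
  then show ?thesis using that by auto
qed

lemma traj_cont:
  assumes "ham_traj g y u X V"
  shows "continuous_on S X" "continuous_on S V"
  using assms unfolding ham_traj_def
  by (auto intro!: continuous_at_imp_continuous_on has_vector_derivative_continuous)


lemma traj_compare:
  fixes g :: "'a::euclidean_space \<Rightarrow> 'a"
  assumes glip: "\<And>a b. norm (g a - g b) \<le> L * norm (a - b)" and L: "L \<ge> 0"
    and T: "T \<ge> 0" and c: "L * T^2 < 1"
    and tr1: "ham_traj g y1 u1 X1 V1" and tr2: "ham_traj g y2 u2 X2 V2"
  shows "norm (X1 T - X2 T - (y1 - y2) - T *\<^sub>R (u1 - u2))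
     \<le> L * T^2 / (1 - L * T^2) * (norm (y1 - y2) + T * norm (u1 - u2))"
proof -
  let ?z = "\<lambda>s. X1 s - X2 s"
  have cz: "continuous_on {0..T} ?z" using traj_cont[OF tr1] traj_cont[OF tr2] by (intro continuous_intros)
  obtain s0 where s0: "0 \<le> s0" "s0 \<le> T" and M: "\<And>t. 0 \<le> t \<Longrightarrow> t \<le> T \<Longrightarrow> norm (?z t) \<le> norm (?z s0)"
    using max_on_interval[OF T cz] by blast
  define M where "M = norm (?z s0)"
  have M0: "M \<ge> 0" by (simp add: M_def)
  have X1d: "(X1 has_vector_derivative V1 t) (at t)" and X2d: "(X2 has_vector_derivative V2 t) (at t)"
   and V1d: "(V1 has_vector_derivative - g (X1 t)) (at t)" and V2d: "(V2 has_vector_derivative - g (X2 t)) (at t)" for t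
    using tr1 tr2 by (auto simp: ham_traj_def)
  have init: "X1 0 = y1" "X2 0 = y2" "V1 0 = u1" "V2 0 = u2" using tr1 tr2 by (auto simp: ham_traj_def)
  have wb: "norm ((V1 t - V2 t) - (u1 - u2)) \<le> L * M * t" if t: "0 \<le> t" "t \<le> T" for t
  proof -
    have "norm ((V1 t - V2 t) - (V1 0 - V2 0)) \<le> (L * M) * (t - 0)"
    proof (rule mvt_at[of 0 t _ "\<lambda>s. - g (X1 s) + g (X2 s)"])
      fix s assume s: "0 \<le> s" "s \<le> t"
      show "((\<lambda>s. V1 s - V2 s) has_vector_derivative - g (X1 s) + g (X2 s)) (at s)"
        using has_vector_derivative_diff[OF V1d V2d] by simp
      have "norm (- g (X1 s) + g (X2 s)) = norm (g (X1 s) - g (X2 s))"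
        by (metis minus_diff_eq norm_minus_cancel uminus_add_conv_diff)
      also have "\<dots> \<le> L * norm (?z s)" by (rule glip)
      also have "\<dots> \<le> L * M" unfolding M_def using M[of s] s t L by (intro mult_left_mono) auto
      finally show "norm (- g (X1 s) + g (X2 s)) \<le> L * M" .
    qed (use t in auto)
    then show ?thesis using init by simp
  qed
  have phib: "norm (?z t - (y1 - y2) - t *\<^sub>R (u1 - u2)) \<le> L * M * T * t" if t: "0 \<le> t" "t \<le> T" for t
  proof -
    have "norm ((?z t - t *\<^sub>R (u1 - u2)) - (?z 0 - 0 *\<^sub>R (u1 - u2))) \<le> (L * M * T) * (t - 0)"
    proof (rule mvt_at[of 0 t _ "\<lambda>s. (V1 s - V2 s) - (u1 - u2)"])
      fix s assume s: "0 \<le> s" "s \<le> t"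
      show "((\<lambda>s. ?z s - s *\<^sub>R (u1 - u2)) has_vector_derivative (V1 s - V2 s) - (u1 - u2)) (at s)"
        by (auto intro!: derivative_eq_intros X1d X2d)
      have "norm ((V1 s - V2 s) - (u1 - u2)) \<le> L * M * s" using wb[of s] s t by auto
      also have "\<dots> \<le> L * M * T" using s t L M0 by (intro mult_left_mono) auto
      finally show "norm ((V1 s - V2 s) - (u1 - u2)) \<le> L * M * T" .
    qed (use t in auto)
    then show ?thesis using init by (simp add: algebra_simps)
  qed
  have zb: "M \<le> norm (y1 - y2) + T * norm (u1 - u2) + L * T^2 * M"
  proof -
    have "M = norm ((?z s0 - (y1 - y2) - s0 *\<^sub>R (u1 - u2)) + (y1 - y2) + s0 *\<^sub>R (u1 - u2))"
      by (simp add: M_def)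
    also have "\<dots> \<le> norm (?z s0 - (y1 - y2) - s0 *\<^sub>R (u1 - u2)) + norm (y1 - y2) + norm (s0 *\<^sub>R (u1 - u2))"
      by (rule order_trans[OF norm_triangle_ineq add_right_mono[OF norm_triangle_ineq]])
    also have "\<dots> \<le> L * M * T * s0 + norm (y1 - y2) + T * norm (u1 - u2)"
      using phib[OF s0] s0 by (intro add_mono) (auto intro: mult_right_mono)
    also have "L * M * T * s0 \<le> L * T^2 * M"
    proof -
      have "L * M * T * s0 \<le> L * M * T * T" using s0 L M0 T by (intro mult_left_mono) auto
      then show ?thesis by (simp add: power2_eq_square algebra_simps)
    qed
    finally show ?thesis by simp
  qed
  have "M \<le> (norm (y1 - y2) + T * norm (u1 - u2)) / (1 - L * T^2)"
    using zb c by (simp add: field_simps)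
  then have "L * T^2 * M \<le> L * T^2 * ((norm (y1 - y2) + T * norm (u1 - u2)) / (1 - L * T^2))"
    using L by (intro mult_left_mono) auto
  moreover have "norm (X1 T - X2 T - (y1 - y2) - T *\<^sub>R (u1 - u2)) \<le> L * T^2 * M"
    using phib[of T] T by (simp add: power2_eq_square mult.commute mult.left_commute)
  ultimately show ?thesis by simp
qed

lemma ham_q_eq:
  fixes g :: "'a::euclidean_space \<Rightarrow> 'a"
  assumes glip: "\<And>a b. norm (g a - g b) \<le> L * norm (a - b)" and L: "L \<ge> 0"
    and T: "T \<ge> 0" and c: "L * T^2 < 1" and tr: "ham_traj g y u X V"
  shows "ham_q g T y u = X T"
  unfolding ham_q_def
proof (rule the_equality)
  show "\<exists>X' V'. ham_traj g y u X' V' \<and> X' T = X T" using tr by blast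
  fix p assume "\<exists>X' V'. ham_traj g y u X' V' \<and> X' T = p"
  then obtain X' V' where tr': "ham_traj g y u X' V'" and p: "X' T = p" by blast
  have "norm (X' T - X T - (y - y) - T *\<^sub>R (u - u)) \<le> L * T^2 / (1 - L * T^2) * (norm (y - y) + T * norm (u - u))"
    by (rule traj_compare[OF glip L T c tr' tr])
  then show "p = X T" using p by simp
qed

lemma traj_d:
  assumes "ham_traj g y u X V"
  shows "\<And>t. (X has_vector_derivative V t) (at t)" "\<And>t. (V has_vector_derivative - g (X t)) (at t)"
    "X 0 = y" "V 0 = u"
  using assms by (auto simp: ham_traj_def)

lemma vel_bound:
  fixes g :: "'a::euclidean_space \<Rightarrow> 'a"
  assumes glip: "\<And>a b. norm (g a - g b) \<le> L * norm (a - b)" and L: "L \<ge> 0" and g0: "g 0 = 0"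
    and T: "T \<ge> 0" and c: "L * T^2 < 1" and tr: "ham_traj g y u X V"
    and s: "0 \<le> s" "s \<le> T"
  shows "norm (V s) \<le> (norm u + L * T * norm y) / (1 - L * T^2)"
proof -
  note d = traj_d[OF tr]
  obtain s1 where s1: "0 \<le> s1" "s1 \<le> T" and P: "\<And>t. 0 \<le> t \<Longrightarrow> t \<le> T \<Longrightarrow> norm (X t) \<le> norm (X s1)"
    using max_on_interval[OF T traj_cont(1)[OF tr]] by blast
  obtain s2 where s2: "0 \<le> s2" "s2 \<le> T" and W: "\<And>t. 0 \<le> t \<Longrightarrow> t \<le> T \<Longrightarrow> norm (V t) \<le> norm (V s2)"
    using max_on_interval[OF T traj_cont(2)[OF tr]] by blast
  define P0 where "P0 = norm (X s1)"
  define W0 where "W0 = norm (V s2)"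
  have "norm (X s1 - X 0) \<le> W0 * (s1 - 0)"
    by (rule mvt_at[of 0 s1 _ V]) (use d s1 W in \<open>auto simp: W0_def\<close>)
  then have "P0 \<le> norm y + W0 * s1" using d norm_triangle_sub[of "X s1" "X 0"] by (simp add: P0_def)
  also have "W0 * s1 \<le> W0 * T" using s1 by (intro mult_left_mono) (auto simp: W0_def)
  finally have P0b: "P0 \<le> norm y + W0 * T" by simp
  have "norm (V s2 - V 0) \<le> (L * P0) * (s2 - 0)"
  proof (rule mvt_at[of 0 s2 _ "\<lambda>t. - g (X t)"])
    fix t assume t: "0 \<le> t" "t \<le> s2"
    show "(V has_vector_derivative - g (X t)) (at t)" by (rule d)
    have "norm (- g (X t)) = norm (g (X t) - g 0)" using g0 by simp
    also have "\<dots> \<le> L * norm (X t - 0)" by (rule glip)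
    also have "\<dots> \<le> L * P0" using P[of t] t s2 L by (intro mult_left_mono) (auto simp: P0_def)
    finally show "norm (- g (X t)) \<le> L * P0" .
  qed (use s2 in auto)
  then have "W0 \<le> norm u + L * P0 * s2" using d norm_triangle_sub[of "V s2" "V 0"] by (simp add: W0_def)
  also have "L * P0 * s2 \<le> L * P0 * T" using s2 L by (intro mult_left_mono) (auto simp: P0_def)
  also have "L * P0 * T \<le> L * T * (norm y + W0 * T)" using P0b L T
    by (metis mult.commute mult.left_commute mult_left_mono zero_le_mult_iff)
  finally have "W0 * (1 - L * T^2) \<le> norm u + L * T * norm y" by (simp add: algebra_simps power2_eq_square)
  then have "W0 \<le> (norm u + L * T * norm y) / (1 - L * T^2)" using c by (simp add: field_simps)
  then show ?thesis using W[OF s] by (simp add: W0_def)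
qed

lemma hvd_lin: "((\<lambda>\<sigma>::real. (\<sigma> - t) *\<^sub>R c) has_vector_derivative c) (at \<sigma>)"
proof -
  have "((\<lambda>\<sigma>::real. \<sigma> - t) has_real_derivative 1) (at \<sigma>)" by (auto intro!: derivative_eq_intros)
  from has_vector_derivative_scaleR[OF this has_vector_derivative_const[of c]] show ?thesis by simp
qed

lemma hvd_sq: "((\<lambda>\<sigma>::real. ((\<sigma> - t)^2/2) *\<^sub>R c) has_vector_derivative (\<sigma> - t) *\<^sub>R c) (at \<sigma>)"
proof -
  have "((\<lambda>\<sigma>::real. (\<sigma> - t)^2/2) has_real_derivative (\<sigma> - t)) (at \<sigma>)" by (auto intro!: derivative_eq_intros)
  from has_vector_derivative_scaleR[OF this has_vector_derivative_const[of c]] show ?thesis by simp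
qed

lemma local_err:
  fixes g :: "'a::euclidean_space \<Rightarrow> 'a"
  assumes glip: "\<And>a b. norm (g a - g b) \<le> L * norm (a - b)" and L: "L \<ge> 0"
    and tr: "ham_traj g y u X V"
    and Wb: "\<And>s. 0 \<le> s \<Longrightarrow> s \<le> T \<Longrightarrow> norm (V s) \<le> W"
    and t: "0 \<le> t" and h: "0 \<le> h" and th: "t + h \<le> T"
  shows "norm (X (t + h) - X t - h *\<^sub>R V t + (h^2/2) *\<^sub>R g (X t)) \<le> L * W * h^3"
    and "norm (V (t + h) - V t + (h/2) *\<^sub>R (g (X t) + g (X (t + h)))) \<le> 3/2 * L * W * h^2"
proof -
  note d = traj_d[OF tr]
  have W0: "W \<ge> 0" proof -
    have "t \<le> T" using h th by linarith
    then show ?thesis using Wb[OF t] norm_ge_zero[of "V t"] by linarith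
  qed
  have L1: "norm (X s - X t) \<le> W * (s - t)" if s: "t \<le> s" "s \<le> T" for s
    by (rule mvt_at[OF s(1)]) (use d Wb t s in auto)
  have L2: "norm (V s - V t + (s - t) *\<^sub>R g (X t)) \<le> L * W * (s - t) * (s - t)" if s: "t \<le> s" "s \<le> T" for s
  proof -
    have "norm ((V s + (s - t) *\<^sub>R g (X t)) - (V t + (t - t) *\<^sub>R g (X t))) \<le> (L * W * (s - t)) * (s - t)"
    proof (rule mvt_at[OF s(1), of _ "\<lambda>\<sigma>. - g (X \<sigma>) + g (X t)"])
      fix \<sigma> assume \<sigma>: "t \<le> \<sigma>" "\<sigma> \<le> s"
      show "((\<lambda>\<sigma>. V \<sigma> + (\<sigma> - t) *\<^sub>R g (X t)) has_vector_derivative - g (X \<sigma>) + g (X t)) (at \<sigma>)"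
        using has_vector_derivative_add[OF d(2)[of \<sigma>] hvd_lin[of t "g (X t)" \<sigma>]] by simp
      have "norm (- g (X \<sigma>) + g (X t)) = norm (g (X \<sigma>) - g (X t))"
        by (metis minus_diff_eq norm_minus_cancel uminus_add_conv_diff)
      also have "\<dots> \<le> L * norm (X \<sigma> - X t)" by (rule glip)
      also have "\<dots> \<le> L * (W * (\<sigma> - t))" using L1[of \<sigma>] \<sigma> s L by (intro mult_left_mono) auto
      also have "\<dots> \<le> L * (W * (s - t))" using \<sigma> L W0 by (intro mult_left_mono) auto
      finally show "norm (- g (X \<sigma>) + g (X t)) \<le> L * W * (s - t)" by (simp add: mult.assoc)
    qed
    then show ?thesis by (simp add: algebra_simps)
  qed
  have "norm ((X (t + h) - (t + h - t) *\<^sub>R V t + ((t + h - t)^2/2) *\<^sub>R g (X t))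
      - (X t - (t - t) *\<^sub>R V t + ((t - t)^2/2) *\<^sub>R g (X t))) \<le> (L * W * h^2) * (t + h - t)"
  proof (rule mvt_at[of t "t+h" _ "\<lambda>\<sigma>. V \<sigma> - V t + (\<sigma> - t) *\<^sub>R g (X t)"])
    fix \<sigma> assume \<sigma>: "t \<le> \<sigma>" "\<sigma> \<le> t + h"
    show "((\<lambda>\<sigma>. X \<sigma> - (\<sigma> - t) *\<^sub>R V t + ((\<sigma> - t)^2/2) *\<^sub>R g (X t)) has_vector_derivative
        V \<sigma> - V t + (\<sigma> - t) *\<^sub>R g (X t)) (at \<sigma>)"
      using has_vector_derivative_add[OF has_vector_derivative_diff[OF d(1)[of \<sigma>] hvd_lin[of t "V t" \<sigma>]]
          hvd_sq[of t "g (X t)" \<sigma>]] by simp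
    have "norm (V \<sigma> - V t + (\<sigma> - t) *\<^sub>R g (X t)) \<le> L * W * (\<sigma> - t) * (\<sigma> - t)" using L2[of \<sigma>] \<sigma> th by auto
    also have "\<dots> \<le> L * W * h^2"
    proof -
      have "(\<sigma> - t) * (\<sigma> - t) \<le> h * h" using \<sigma> by (intro mult_mono) auto
      then have "L * W * ((\<sigma> - t) * (\<sigma> - t)) \<le> L * W * (h * h)" using L W0 by (intro mult_left_mono) auto
      then show ?thesis by (simp add: power2_eq_square mult.assoc)
    qed
    finally show "norm (V \<sigma> - V t + (\<sigma> - t) *\<^sub>R g (X t)) \<le> L * W * h^2" .
  qed (use h in auto)
  then show "norm (X (t + h) - X t - h *\<^sub>R V t + (h^2/2) *\<^sub>R g (X t)) \<le> L * W * h^3"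
    by (simp add: algebra_simps power3_eq_cube power2_eq_square)
  have e: "V (t + h) - V t + (h/2) *\<^sub>R (g (X t) + g (X (t + h)))
      = (V (t + h) - V t + (t + h - t) *\<^sub>R g (X t)) + (h/2) *\<^sub>R (g (X (t + h)) - g (X t))"
      proof -
    have hh: "h *\<^sub>R a = (h/2) *\<^sub>R a + (h/2) *\<^sub>R a" for a :: 'a
      by (metis field_sum_of_halves scaleR_add_left)
    show ?thesis by (simp add: hh[of "g (X t)"] algebra_simps)
  qed
  have "norm (V (t + h) - V t + (h/2) *\<^sub>R (g (X t) + g (X (t + h))))
      \<le> norm (V (t + h) - V t + (t + h - t) *\<^sub>R g (X t)) + norm ((h/2) *\<^sub>R (g (X (t + h)) - g (X t)))"
    unfolding e by (rule norm_triangle_ineq)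
  also have "\<dots> \<le> L * W * h * h + h/2 * (L * (W * h))"
  proof (rule add_mono)
    show "norm (V (t + h) - V t + (t + h - t) *\<^sub>R g (X t)) \<le> L * W * h * h"
      using L2[of "t+h"] h th by simp
    have "norm (g (X (t + h)) - g (X t)) \<le> L * (W * h)"
      using glip[of "X (t+h)" "X t"] L1[of "t+h"] h th L proof -
      have "norm (X (t + h) - X t) \<le> W * (t + h - t)" using L1[of "t+h"] h th by simp
      then show ?thesis using order_trans[OF glip[of "X (t+h)" "X t"] mult_left_mono[OF _ L]] by simp
    qed
    then show "norm ((h/2) *\<^sub>R (g (X (t + h)) - g (X t))) \<le> h/2 * (L * (W * h))"
      using h by (simp add: mult_left_mono)
  qed
  finally show "norm (V (t + h) - V t + (h/2) *\<^sub>R (g (X t) + g (X (t + h)))) \<le> 3/2 * L * W * h^2"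
    by (simp add: algebra_simps power2_eq_square)
qed



lemma disc:
  fixes e f :: "nat \<Rightarrow> 'a::real_normed_vector"
  assumes h: "h \<ge> 0" and L: "L \<ge> 0" and Ra: "Ra \<ge> 0" and Rb: "Rb \<ge> 0"
    and Ab: "\<And>j. j \<le> N \<Longrightarrow> norm (e j) \<le> A"
    and re: "\<And>j. j < N \<Longrightarrow> norm (e (Suc j) - e j - h *\<^sub>R f j) \<le> h^2/2 * L * norm (e j) + Ra"
    and rf: "\<And>j. j < N \<Longrightarrow> norm (f (Suc j) - f j) \<le> h/2 * L * (norm (e j) + norm (e (Suc j))) + Rb"
  shows "\<And>j. j \<le> N \<Longrightarrow> norm (e j - e 0 - (real j * h) *\<^sub>R f 0)
      \<le> real j * (h * real N * (h * L * A + Rb) + h^2/2 * L * A + Ra)"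
proof -
  have A0: "A \<ge> 0" using Ab[of 0] norm_ge_zero[of "e 0"] by linarith
  have Fb: "norm (f j - f 0) \<le> real j * (h * L * A + Rb)" if "j \<le> N" for j
    using that
  proof (induction j)
    case 0 then show ?case by simp
  next
    case (Suc j)
    then have j: "j < N" by simp
    have "norm (f (Suc j) - f 0) \<le> norm (f j - f 0) + norm (f (Suc j) - f j)"
      by (metis norm_triangle_ineq add.commute diff_add_cancel add_diff_eq)
    also have "\<dots> \<le> real j * (h * L * A + Rb) + (h/2 * L * (norm (e j) + norm (e (Suc j))) + Rb)"
      using Suc.IH j rf[OF j] by (intro add_mono) auto
    also have "h/2 * L * (norm (e j) + norm (e (Suc j))) \<le> h/2 * L * (A + A)"
      using Ab[of j] Ab[of "Suc j"] j h L by (intro mult_left_mono add_mono) auto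
    finally show ?case by (simp add: algebra_simps)
  qed
  fix j assume "j \<le> N"
  then show "norm (e j - e 0 - (real j * h) *\<^sub>R f 0) \<le> real j * (h * real N * (h * L * A + Rb) + h^2/2 * L * A + Ra)"
  proof (induction j)
    case 0 then show ?case by simp
  next
    case (Suc j)
    then have j: "j < N" by simp
    have eq: "e (Suc j) - e 0 - (real (Suc j) * h) *\<^sub>R f 0
      = (e j - e 0 - (real j * h) *\<^sub>R f 0) + (e (Suc j) - e j - h *\<^sub>R f j) + h *\<^sub>R (f j - f 0)"
      by (simp add: algebra_simps)
    have "norm (e (Suc j) - e 0 - (real (Suc j) * h) *\<^sub>R f 0)
      \<le> norm (e j - e 0 - (real j * h) *\<^sub>R f 0) + norm (e (Suc j) - e j - h *\<^sub>R f j) + norm (h *\<^sub>R (f j - f 0))"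
      unfolding eq by (rule order_trans[OF norm_triangle_ineq add_right_mono[OF norm_triangle_ineq]])
    also have "\<dots> \<le> real j * (h * real N * (h * L * A + Rb) + h^2/2 * L * A + Ra)
        + (h^2/2 * L * A + Ra) + h * (real N * (h * L * A + Rb))"
    proof (intro add_mono)
      show "norm (e j - e 0 - (real j * h) *\<^sub>R f 0) \<le> real j * (h * real N * (h * L * A + Rb) + h^2/2 * L * A + Ra)"
        using Suc.IH j by simp
      have "h^2/2 * L * norm (e j) \<le> h^2/2 * L * A" using Ab[of j] j h L by (intro mult_left_mono) auto
      then show "norm (e (Suc j) - e j - h *\<^sub>R f j) \<le> h^2/2 * L * A + Ra" using re[OF j] by linarith
      have "real j * (h * L * A + Rb) \<le> real N * (h * L * A + Rb)"
        using j h L A0 Rb by (intro mult_right_mono) auto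
      then have "norm (f j - f 0) \<le> real N * (h * L * A + Rb)" using Fb[of j] j by linarith
      then show "norm (h *\<^sub>R (f j - f 0)) \<le> h * (real N * (h * L * A + Rb))"
        using h by (simp add: mult_left_mono)
    qed
    finally show ?case by (simp add: algebra_simps add_divide_distrib)
  qed
qed

lemma final_arith:
  fixes a b T h L A D W nu ny nv nx :: real
  assumes T: "T > 0" and h: "h > 0" "h \<le> T" and L: "L \<ge> 0" and small: "L * (T^2 + T * h) \<le> 1/12"
    and a: "a \<ge> 0" and b: "b \<ge> 0" and A: "A \<ge> 0" and W0: "W \<ge> 0"
    and eA: "A \<le> a + b + L * (T^2 + T * h / 2) * A + D"
    and eb: "b \<le> a + L * (T^2 + T * h / 2) * A + D"
    and D: "D = L * h * T * (3/2 * T + h) * W"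
    and W: "W \<le> (nu + L * T * ny) / (1 - L * T^2)"
    and nu: "nu \<le> nv + b / T" "nu \<ge> 0" and ny: "ny \<le> nx + a" "ny \<ge> 0" and nv: "nv \<ge> 0" and nx: "nx \<ge> 0"
  shows "b / T \<le> 3 / (2 * T) * a + 7/5 * h * (1 / (5 * T) * nv + 7/36 * L * nx)"
proof -
  define c where "c = L * (T^2 + T * h / 2)"
  have c0: "c \<ge> 0" using L T h by (simp add: c_def)
  have c1: "c \<le> 1/12"
  proof -
    have "T^2 + T * h / 2 \<le> T^2 + T * h" using T h by simp
    then have "L * (T^2 + T * h / 2) \<le> L * (T^2 + T * h)" using L by (rule mult_left_mono)
    then show ?thesis using small c_def by linarith
  qed
  have F1: "11 * (c * A) \<le> a + b + D"
  proof -
    have "11 * c * A \<le> (1 - c) * A" using c1 A by (intro mult_right_mono) auto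
    then show ?thesis using eA unfolding c_def[symmetric] by (simp add: algebra_simps)
  qed
  have LT: "L * T^2 \<le> 1/12" "L * T * h \<le> 1/12"
  proof -
    have e: "L * (T^2 + T * h) = L * T^2 + L * T * h" by (simp add: algebra_simps)
    have "L * T^2 \<ge> 0" "L * T * h \<ge> 0" using L T h by auto
    then show "L * T^2 \<le> 1/12" "L * T * h \<le> 1/12" using small e by linarith+
  qed
  have F2: "D \<le> h * W / 8"
  proof -
    have "L * T * (3/2 * T + h) \<le> 3/2 * (L * (T^2 + T * h))" using L T h
      by (simp add: algebra_simps power2_eq_square mult_left_mono mult_nonneg_nonneg)
    also have "\<dots> \<le> 1/8" using small by simp
    finally have "L * T * (3/2 * T + h) * (h * W) \<le> 1/8 * (h * W)"
      using h W0 by (intro mult_right_mono) auto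
    then show ?thesis unfolding D by (simp add: algebra_simps)
  qed
  have F3: "h * W \<le> 12/11 * (h * nu + h * L * T * ny)"
  proof -
    have pos: "1 - L * T^2 \<ge> 11/12" using LT by simp
    have num: "nu + L * T * ny \<ge> 0" using nu ny L T by simp
    have "(nu + L * T * ny) / (1 - L * T^2) \<le> (nu + L * T * ny) / (11/12)"
      by (rule divide_left_mono[OF pos num]) (use pos in simp)
    then have "W \<le> (nu + L * T * ny) / (11/12)" using W by linarith
    then have "h * W \<le> h * ((nu + L * T * ny) / (11/12))" using h by (intro mult_left_mono) auto
    then show ?thesis by (simp add: algebra_simps)
  qed
  have F4: "h * nu \<le> h * nv + b * (h / T)" "b * (h / T) \<le> b"
  proof -
    show "h * nu \<le> h * nv + b * (h / T)" using mult_left_mono[OF nu(1), of h] h by (simp add: algebra_simps)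
    have "h / T \<le> 1" using h T by simp
    then show "b * (h / T) \<le> b" using b mult_left_mono[of "h/T" 1 b] by simp
  qed
  have F5: "h * L * T * ny \<le> h * L * T * nx + a / 12"
  proof -
    have "h * L * T * ny \<le> h * L * T * (nx + a)" using ny h L T by (intro mult_left_mono) auto
    moreover have "h * L * T * a \<le> 1/12 * a" using LT a by (intro mult_right_mono) (auto simp: algebra_simps)
    ultimately show ?thesis by (simp add: algebra_simps)
  qed
  have eb': "b \<le> a + c * A + D" using eb by (simp add: c_def)
  have key: "b \<le> 267/184 * a + 9/46 * (h * nv) + 9/46 * (h * L * T * nx)"
  proof -
    have s1: "10 * b \<le> 12 * a + 12 * D" using F1 eb' by linarith
    have s2: "12 * D \<le> 18/11 * (h * nu + h * L * T * ny)" using F2 F3 by linarith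
    have s3: "h * nu + h * L * T * ny \<le> h * nv + b + h * L * T * nx + a / 12" using F4 F5 by linarith
    have gen: "\<And>b a D p q r s :: real. 10 * b \<le> 12 * a + 12 * D \<Longrightarrow> 12 * D \<le> 18/11 * (p + q)
       \<Longrightarrow> p + q \<le> r + b + s + a / 12 \<Longrightarrow> b \<le> 267/184 * a + 9/46 * r + 9/46 * s"
      by (simp add: field_simps)
    show ?thesis by (rule gen[OF s1 s2 s3])
  qed
  have "b \<le> T * (3 / (2 * T) * a + 7/5 * h * (1 / (5 * T) * nv + 7/36 * L * nx))"
  proof -
    have "T * (3 / (2 * T) * a + 7/5 * h * (1 / (5 * T) * nv + 7/36 * L * nx))
       = 3/2 * a + 7/25 * (h * nv) + 49/180 * (h * L * T * nx)"
      using T by (simp add: field_simps)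
    moreover have "h * nv \<ge> 0" "h * L * T * nx \<ge> 0" using h nv L T nx by auto
    ultimately show ?thesis using key a by linarith
  qed
  then show ?thesis using T by (simp add: divide_le_eq mult.commute)
qed



theorem lemma8:
  fixes f :: "'a::euclidean_space \<Rightarrow> real"
    and g :: "'a \<Rightarrow> 'a"
    and H :: "'a \<Rightarrow> 'a \<Rightarrow>\<^sub>L 'a"
    and L T h :: real
    and x y :: "'a"
    and \<Phi> :: "'a \<Rightarrow> 'a"
  assumes min0: "\<forall>z. f 0 \<le> f z" and f0: "f 0 = 0"
    and grad: "\<forall>z. (f has_derivative (\<lambda>u. g z \<bullet> u)) (at z)"
    and hess: "\<forall>z. (g has_derivative blinfun_apply (H z)) (at z)"
    and hess_cont: "continuous_on UNIV H"
    and hess_bound: "\<forall>z. norm (H z) \<le> L"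
    and T_pos: "T > 0" and h_nonneg: "h \<ge> 0"
    and grid: "h > 0 \<longrightarrow> (\<exists>N::nat. T = real N * h)"
    and small: "L * (T^2 + T * h) \<le> 1/12"
    and Phi: "\<forall>w. lf_q g T h x w = ham_q g T y (\<Phi> w)"
  shows "\<forall>v. norm (\<Phi> v - v) \<le> 3 / (2 * T) * norm (x - y)
             + 7/5 * h * (1 / (5 * T) * norm v + 7/36 * L * norm x)"
proof
  fix v
  have L: "L \<ge> 0" using hess_bound norm_ge_zero order_trans by blast
  have glip: "norm (g a - g b) \<le> L * norm (a - b)" for a b
  proof (rule differentiable_bound[of UNIV g "\<lambda>z. blinfun_apply (H z)"])
    show "convex (UNIV :: 'a set)" by simp
    show "(g has_derivative blinfun_apply (H z)) (at z within UNIV)" for z using hess by simp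
    show "onorm (blinfun_apply (H z)) \<le> L" for z using hess_bound by (simp add: norm_blinfun.rep_eq[symmetric])
  qed auto
  have g0: "g 0 = 0"
  proof -
    have "(\<lambda>u. g 0 \<bullet> u) = (\<lambda>u. 0)"
      by (rule differential_zero_maxmin[of 0 UNIV f]) (use grad min0 in auto)
    then have "g 0 \<bullet> g 0 = 0" by meson
    then show ?thesis by simp
  qed
  have LT2: "L * T^2 \<le> 1/12"
  proof -
    have "L * T^2 \<le> L * (T^2 + T * h)" using L T_pos h_nonneg by (intro mult_left_mono) auto
    then show ?thesis using small by linarith
  qed
  then have c: "L * T^2 < 1" by simp
  have T0: "T \<ge> 0" using T_pos by simp
  define u where "u = \<Phi> v"
  obtain X V where tr: "ham_traj g y u X V" using ham_exists[OF glip L] by blast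
  have qX: "ham_q g T y u = X T" by (rule ham_q_eq[OF glip L T0 c tr])
  show "norm (\<Phi> v - v) \<le> 3 / (2 * T) * norm (x - y) + 7/5 * h * (1 / (5 * T) * norm v + 7/36 * L * norm x)"
  proof (cases "h = 0")
    case True
    obtain X2 V2 where tr2: "ham_traj g x v X2 V2" using ham_exists[OF glip L] by blast
    have "X T = X2 T" using Phi[rule_format, of v] True qX ham_q_eq[OF glip L T0 c tr2]
      by (simp add: lf_q_def u_def)
    then have "norm (- (y - x) - T *\<^sub>R (u - v)) \<le> L * T^2 / (1 - L * T^2) * (norm (y - x) + T * norm (u - v))"
      using traj_compare[OF glip L T0 c tr tr2] by simp
    moreover have "L * T^2 / (1 - L * T^2) \<le> 1/11" using LT2 c by (simp add: field_simps)
    ultimately have k: "norm (- (y - x) - T *\<^sub>R (u - v)) \<le> 1/11 * (norm (y - x) + T * norm (u - v))"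
      by (smt (verit) mult_right_mono norm_ge_zero T0 mult_nonneg_nonneg)
    have "T * norm (u - v) = norm (T *\<^sub>R (u - v))" using T0 by simp
    also have "\<dots> \<le> norm (- (y - x) - T *\<^sub>R (u - v)) + norm (y - x)"
      by (metis add.commute norm_minus_commute norm_triangle_sub diff_minus_eq_add minus_diff_eq)
    finally have "T * norm (u - v) \<le> 6/5 * norm (x - y)" using k by (simp add: norm_minus_commute)
    then have "norm (u - v) \<le> 6/5 * norm (x - y) / T" using T_pos by (simp add: field_simps)
    also have "\<dots> \<le> 3 / (2 * T) * norm (x - y)" using T_pos by (simp add: field_simps)
    finally show ?thesis using True by (simp add: u_def)
  next
    case False
    then have h: "h > 0" using h_nonneg by simp
    then obtain N :: nat where TN: "T = real N * h" using grid by blast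
    have N1: "N \<ge> 1" using TN T_pos by (cases N) auto
    have hT: "h \<le> T" using TN N1 h by simp
    have fl: "nat \<lfloor>T / h\<rfloor> = N" using TN h by simp
    define xs where "xs j = fst ((lf_step g h ^^ j) (x, v))" for j
    define vs where "vs j = snd ((lf_step g h ^^ j) (x, v))" for j
    have st: "(lf_step g h ^^ j) (x, v) = (xs j, vs j)" for j by (simp add: xs_def vs_def)
    have xsS: "xs (Suc j) = xs j + h *\<^sub>R vs j - (h^2/2) *\<^sub>R g (xs j)" for j
      by (simp add: xs_def vs_def lf_step_def Let_def)
    have vsS: "vs (Suc j) = vs j - (h/2) *\<^sub>R (g (xs j) + g (xs (Suc j)))" for j
      by (simp add: xs_def vs_def lf_step_def Let_def)
    have xs0: "xs 0 = x" "vs 0 = v" by (auto simp: xs_def vs_def)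
    have XT: "X T = xs N" using Phi[rule_format, of v] qX False fl by (simp add: lf_q_def u_def xs_def)
    define W where "W = (norm u + L * T * norm y) / (1 - L * T^2)"
    have Wb: "norm (V s) \<le> W" if "0 \<le> s" "s \<le> T" for s
      unfolding W_def by (rule vel_bound[OF glip L g0 T0 c tr that])
    have W0: "W \<ge> 0" using Wb[of 0] T0 norm_ge_zero[of "V 0"] by linarith
    define e where "e j = X (real j * h) - xs j" for j
    define fe where "fe j = V (real j * h) - vs j" for j
    have jh: "real (Suc j) * h = real j * h + h" for j by (simp add: algebra_simps)
    have eS: "e (Suc j) = X (real j * h + h) - xs (Suc j)" for j unfolding e_def jh ..
    have fS: "fe (Suc j) = V (real j * h + h) - vs (Suc j)" for j unfolding fe_def jh ..
    have tj: "0 \<le> real j * h" "real j * h + h \<le> T" if "j < N" for j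
      using that h TN by (auto simp: jh[symmetric] intro!: mult_right_mono)
    have re: "norm (e (Suc j) - e j - h *\<^sub>R fe j) \<le> h^2/2 * L * norm (e j) + L * W * h^3" if j: "j < N" for j
    proof -
      let ?t = "real j * h"
      have eq: "e (Suc j) - e j - h *\<^sub>R fe j
        = (X (?t + h) - X ?t - h *\<^sub>R V ?t + (h^2/2) *\<^sub>R g (X ?t)) - (h^2/2) *\<^sub>R (g (X ?t) - g (xs j))"
        unfolding eS by (simp add: e_def fe_def xsS algebra_simps)
      have "norm (e (Suc j) - e j - h *\<^sub>R fe j) \<le> norm (X (?t + h) - X ?t - h *\<^sub>R V ?t + (h^2/2) *\<^sub>R g (X ?t))
          + norm ((h^2/2) *\<^sub>R (g (X ?t) - g (xs j)))"
        unfolding eq by (rule norm_triangle_ineq4)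
      also have "\<dots> \<le> L * W * h^3 + h^2/2 * (L * norm (e j))"
      proof (rule add_mono)
        show "norm (X (?t + h) - X ?t - h *\<^sub>R V ?t + (h^2/2) *\<^sub>R g (X ?t)) \<le> L * W * h^3"
          by (rule local_err(1)[OF glip L tr Wb tj(1)[OF j] h_nonneg tj(2)[OF j]])
        show "norm ((h^2/2) *\<^sub>R (g (X ?t) - g (xs j))) \<le> h^2/2 * (L * norm (e j))"
          using glip[of "X ?t" "xs j"] by (simp add: e_def mult_left_mono)
      qed
      finally show ?thesis by (simp add: algebra_simps)
    qed
    have rf: "norm (fe (Suc j) - fe j) \<le> h/2 * L * (norm (e j) + norm (e (Suc j))) + 3/2 * L * W * h^2" if j: "j < N" for j
    proof -
      let ?t = "real j * h"
      have eq: "fe (Suc j) - fe j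
        = (V (?t + h) - V ?t + (h/2) *\<^sub>R (g (X ?t) + g (X (?t + h))))
          - (h/2) *\<^sub>R ((g (X ?t) - g (xs j)) + (g (X (?t + h)) - g (xs (Suc j))))"
        unfolding fS by (simp add: fe_def vsS algebra_simps)
      have "norm (fe (Suc j) - fe j) \<le> norm (V (?t + h) - V ?t + (h/2) *\<^sub>R (g (X ?t) + g (X (?t + h))))
          + norm ((h/2) *\<^sub>R ((g (X ?t) - g (xs j)) + (g (X (?t + h)) - g (xs (Suc j)))))"
        unfolding eq by (rule norm_triangle_ineq4)
      also have "\<dots> \<le> 3/2 * L * W * h^2 + h/2 * (L * norm (e j) + L * norm (e (Suc j)))"
      proof (rule add_mono)
        show "norm (V (?t + h) - V ?t + (h/2) *\<^sub>R (g (X ?t) + g (X (?t + h)))) \<le> 3/2 * L * W * h^2"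
          by (rule local_err(2)[OF glip L tr Wb tj(1)[OF j] h_nonneg tj(2)[OF j]])
        have "norm ((g (X ?t) - g (xs j)) + (g (X (?t + h)) - g (xs (Suc j))))
            \<le> L * norm (e j) + L * norm (e (Suc j))"
          using glip[of "X ?t" "xs j"] glip[of "X (?t + h)" "xs (Suc j)"]
          unfolding eS by (auto simp: e_def intro: order_trans[OF norm_triangle_ineq] add_mono)
        then show "norm ((h/2) *\<^sub>R ((g (X ?t) - g (xs j)) + (g (X (?t + h)) - g (xs (Suc j)))))
            \<le> h/2 * (L * norm (e j) + L * norm (e (Suc j)))"
          using h by (simp add: mult_left_mono)
      qed
      finally show ?thesis by (simp add: algebra_simps)
    qed
    define A where "A = Max ((\<lambda>j. norm (e j)) ` {..N})"
    have Ab: "norm (e j) \<le> A" if "j \<le> N" for j using that by (auto simp: A_def)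
    have "A \<in> (\<lambda>j. norm (e j)) ` {..N}" unfolding A_def by (rule Max_in) auto
    then obtain j0 where j0: "j0 \<le> N" "norm (e j0) = A" by auto
    have A0: "A \<ge> 0" using Ab[of 0] norm_ge_zero[of "e 0"] by linarith
    define Q where "Q = h * real N * (h * L * A + 3/2 * L * W * h^2) + h^2/2 * L * A + L * W * h^3"
    have Q0: "Q \<ge> 0" using h L A0 W0 by (simp add: Q_def)
    have dj: "norm (e j - e 0 - (real j * h) *\<^sub>R fe 0) \<le> real j * Q" if "j \<le> N" for j
    proof -
      have r: "0 \<le> L * W * h^3" "0 \<le> 3/2 * L * W * h^2" using L W0 h by auto
      show ?thesis unfolding Q_def by (rule disc[where Ra="L * W * h^3" and Rb="3/2 * L * W * h^2" and e=e and f=fe and N=N and A=A and h=h and L=L, OF h_nonneg L r Ab re rf that])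
    qed
    define D where "D = L * h * T * (3/2 * T + h) * W"
    have NQ: "real N * Q = L * (T^2 + T * h / 2) * A + D"
      unfolding Q_def D_def TN power2_eq_square power3_eq_cube by (simp add: field_simps)
    define a where "a = norm (x - y)"
    define b where "b = T * norm (u - v)"
    have e0: "e 0 = y - x" "fe 0 = u - v" using traj_d(3,4)[OF tr] xs0 by (auto simp: e_def fe_def)
    have a0: "a \<ge> 0" "b \<ge> 0" using T0 by (auto simp: a_def b_def)
    have eA: "A \<le> a + b + L * (T^2 + T * h / 2) * A + D"
    proof -
      have "A = norm ((e j0 - e 0 - (real j0 * h) *\<^sub>R fe 0) + e 0 + (real j0 * h) *\<^sub>R fe 0)" using j0 by simp
      also have "\<dots> \<le> norm (e j0 - e 0 - (real j0 * h) *\<^sub>R fe 0) + norm (e 0) + norm ((real j0 * h) *\<^sub>R fe 0)"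
        by (rule order_trans[OF norm_triangle_ineq add_right_mono[OF norm_triangle_ineq]])
      also have "\<dots> \<le> real N * Q + a + b"
      proof (intro add_mono)
        show "norm (e j0 - e 0 - (real j0 * h) *\<^sub>R fe 0) \<le> real N * Q"
          using dj[OF j0(1)] mult_right_mono[OF _ Q0, of "real j0" "real N"] j0 by simp
        show "norm (e 0) \<le> a" using e0 by (simp add: a_def norm_minus_commute)
        have "real j0 * h \<le> T" using j0 h TN by (simp add: mult_right_mono)
        then show "norm ((real j0 * h) *\<^sub>R fe 0) \<le> b"
          using e0 h by (simp add: b_def mult_right_mono)
      qed
      finally show ?thesis using NQ by linarith
    qed
    have eb: "b \<le> a + L * (T^2 + T * h / 2) * A + D"
    proof -
      have eN: "e N = 0" using XT TN by (simp add: e_def)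
      have "b = norm (T *\<^sub>R fe 0)" using T0 e0 by (simp add: b_def)
      also have "\<dots> \<le> norm (e N - e 0 - (real N * h) *\<^sub>R fe 0) + norm (e 0)"
      proof -
        have eqv: "T *\<^sub>R fe 0 = - (e N - e 0 - (real N * h) *\<^sub>R fe 0) - e 0" using eN TN by simp
        have "norm (T *\<^sub>R fe 0) \<le> norm (- (e N - e 0 - (real N * h) *\<^sub>R fe 0)) + norm (e 0)"
          unfolding eqv by (rule norm_triangle_ineq4)
        then show ?thesis by (simp only: norm_minus_cancel)
      qed
      also have "\<dots> \<le> real N * Q + a"
        using dj[of N] e0 by (simp add: a_def norm_minus_commute)
      finally show ?thesis using NQ by linarith
    qed
    have "b / T \<le> 3 / (2 * T) * a + 7/5 * h * (1 / (5 * T) * norm v + 7/36 * L * norm x)"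
    proof (rule final_arith[OF T_pos h hT L small a0(1) a0(2) A0 W0 eA eb D_def eq_refl[OF W_def]])
      show "norm u \<le> norm v + b / T" using T_pos norm_triangle_sub[of u v] by (simp add: b_def)
      show "norm y \<le> norm x + a" using norm_triangle_sub[of y x] by (simp add: a_def norm_minus_commute)
    qed auto
    then show ?thesis using T_pos by (simp add: a_def b_def u_def)
  qed
qed


end
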